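(* Let $(X,\|\cdot\|_X)$ be a Banach space and $\mathcal{K}\subset X$ a bounded set. For every $n\ge1$, every $\gamma>0$ and every norm $\|\cdot\|_{Y_n}$ on $\mathbb{R}^n$, $$\mathrm{rad}(\mathcal{K})-\gamma\le d^\gamma(\mathcal{K},Y_n)_X\le\mathrm{rad}(\mathcal{K}).$$
   Context: $\mathrm{rad}(\mathcal{K})=\inf_{g\in X}\sup_{f\in\mathcal{K}}\|f-g\|_X$. For a norm $\|\cdot\|_{Y_n}$ on $\mathbb{R}^n$ let $B_{Y_n}=\{y\in\mathbb{R}^n:\|y\|_{Y_n}\le1\}$. The fixed Lipschitz width is $d^\gamma(\mathcal{K},Y_n)_X=\inf_{\Phi}\sup_{f\in\mathcal{K}}\inf_{y\in B_{Y_n}}\|f-\Phi(y)\|_X$, the infimum being over all maps $\Phi:B_{Y_n}\to X$ with $\|\Phi(y)-\Phi(y')\|_X\le\gamma\|y-y'\|_{Y_n}$ for all $y,y'\in B_{Y_n}$. *)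

theory Defs
  imports "HOL-Analysis.Analysis"
begin

definition is_norm :: "('b::real_vector \<Rightarrow> real) \<Rightarrow> bool" where
  "is_norm N \<longleftrightarrow>
     (\<forall>x. 0 \<le> N x) \<and> (\<forall>x. N x = 0 \<longleftrightarrow> x = 0) \<and>
     (\<forall>c x. N (c *\<^sub>R x) = \<bar>c\<bar> * N x) \<and>
     (\<forall>x y. N (x + y) \<le> N x + N y)"

definition unit_ball_of :: "('b::real_vector \<Rightarrow> real) \<Rightarrow> 'b set" where
  "unit_ball_of N = {y. N y \<le> 1}"

definition rad :: "'a::real_normed_vector set \<Rightarrow> real" where
  "rad K = (INF g. SUP f\<in>K. norm (f - g))"

definition lip_maps :: "real \<Rightarrow> ('b::real_vector \<Rightarrow> real) \<Rightarrow> ('b \<Rightarrow> 'a::real_normed_vector) set" where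
  "lip_maps \<gamma> N = {\<Phi>. \<forall>y\<in>unit_ball_of N. \<forall>y'\<in>unit_ball_of N.
                         norm (\<Phi> y - \<Phi> y') \<le> \<gamma> * N (y - y')}"

definition lip_width :: "'a::real_normed_vector set \<Rightarrow> real \<Rightarrow> ('b::real_vector \<Rightarrow> real) \<Rightarrow> real" where
  "lip_width K \<gamma> N =
     (INF \<Phi>\<in>(lip_maps \<gamma> N :: ('b \<Rightarrow> 'a) set).
        SUP f\<in>K. INF y\<in>unit_ball_of N. norm (f - \<Phi> y))"

end

theory Submission
  imports Defs
begin

theorem lemma2p4:
  fixes K :: "'a::banach set" and \<gamma> :: real and N :: "real ^ 'n \<Rightarrow> real"
  assumes "bounded K" and "\<gamma> > 0" and "is_norm N"
  shows "rad K - \<gamma> \<le> lip_width K \<gamma> N \<and> lip_width K \<gamma> N \<le> rad K"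
proof -
  have N0: "N 0 = 0" and Nnn: "\<And>x. N x \<ge> 0" using assms(3) unfolding is_norm_def by auto
  have B0: "(0::real^'n) \<in> unit_ball_of N" using N0 by (simp add: unit_ball_of_def)
  hence Bne: "unit_ball_of N \<noteq> {}" by blast
  have constin: "(\<lambda>_. g) \<in> (lip_maps \<gamma> N :: (real^'n \<Rightarrow> 'a) set)" for g :: 'a
    using assms(2) Nnn by (simp add: lip_maps_def)
  hence Lne: "(lip_maps \<gamma> N :: (real^'n \<Rightarrow> 'a) set) \<noteq> {}" by blast
  define h where "h g = (SUP f\<in>K. norm (f - g))" for g
  define D where "D \<Phi> = (SUP f\<in>K. INF y\<in>unit_ball_of N. norm (f - \<Phi> y))" for \<Phi> :: "real^'n \<Rightarrow> 'a"
  have radh: "rad K = (INF g. h g)" unfolding rad_def h_def by simp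
  have lwD: "lip_width K \<gamma> N = (INF \<Phi>\<in>(lip_maps \<gamma> N :: (real^'n \<Rightarrow> 'a) set). D \<Phi>)"
    unfolding lip_width_def D_def by simp
  show ?thesis
  proof (cases "K = {}")
    case True
    have "rad K = Sup {}" by (simp add: rad_def True cINF_const)
    moreover have "lip_width K \<gamma> N = Sup {}"
      using Lne by (simp add: lip_width_def True cINF_const)
    ultimately show ?thesis using assms(2) by simp
  next
    case False
    obtain M where M: "\<And>f. f \<in> K \<Longrightarrow> norm f \<le> M" using assms(1) unfolding bounded_iff by blast
    have bddh: "bdd_above ((\<lambda>f. norm (f - g)) ` K)" for g
    proof (rule bdd_aboveI2)
      fix f assume "f \<in> K"
      thus "norm (f - g) \<le> M + norm g" using M[of f] norm_triangle_ineq4[of f g] by linarith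
    qed
    have hupper: "norm (f - g) \<le> h g" if "f \<in> K" for f g
      unfolding h_def using cSUP_upper[OF that bddh] .
    have bddR: "bdd_below (range h)"
    proof (rule bdd_belowI2)
      fix g
      obtain f where "f \<in> K" using False by blast
      thus "0 \<le> h g" using hupper[of f g] by (meson norm_ge_zero order_trans)
    qed
    have Rle: "rad K \<le> h g" for g unfolding radh using cINF_lower[OF bddR] by simp
    have key: "D \<Phi> \<ge> rad K - \<gamma>" if "\<Phi> \<in> lip_maps \<gamma> N" for \<Phi>
    proof -
      let ?g = "\<Phi> 0"
      let ?I = "\<lambda>f. INF y\<in>unit_ball_of N. norm (f - \<Phi> y)"
      have Ilow: "?I f \<ge> norm (f - ?g) - \<gamma>" for f
      proof (rule cINF_greatest[OF Bne])
        fix y assume y: "y \<in> unit_ball_of N"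
        have "norm (\<Phi> y - \<Phi> 0) \<le> \<gamma> * N (y - 0)" using that y B0 unfolding lip_maps_def by blast
        also have "\<dots> \<le> \<gamma>" using y assms(2) by (simp add: unit_ball_of_def)
        finally have "norm (\<Phi> y - \<Phi> 0) \<le> \<gamma>" .
        moreover have "norm (f - ?g) \<le> norm (f - \<Phi> y) + norm (\<Phi> y - ?g)"
          by (metis diff_add_cancel norm_triangle_ineq add.commute diff_diff_eq2)
        ultimately show "norm (f - ?g) - \<gamma> \<le> norm (f - \<Phi> y)" by linarith
      qed
      have Iup: "?I f \<le> norm (f - ?g)" for f
      proof -
        have "bdd_below ((\<lambda>y. norm (f - \<Phi> y)) ` unit_ball_of N)"
          by (rule bdd_belowI2[where m=0]) simp
        from cINF_lower[OF this B0] show ?thesis .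
      qed
      have bddI: "bdd_above (?I ` K)"
      proof (rule bdd_aboveI2)
        fix f assume "f \<in> K"
        thus "?I f \<le> M + norm ?g" using Iup[of f] M[of f] norm_triangle_ineq4[of f ?g] by linarith
      qed
      have "h ?g \<le> D \<Phi> + \<gamma>" unfolding h_def
      proof (rule cSUP_least[OF False])
        fix f assume f: "f \<in> K"
        have "?I f \<le> D \<Phi>" unfolding D_def using cSUP_upper[OF f bddI] .
        thus "norm (f - ?g) \<le> D \<Phi> + \<gamma>" using Ilow[of f] by linarith
      qed
      thus ?thesis using Rle[of ?g] by linarith
    qed
    have lower: "rad K - \<gamma> \<le> lip_width K \<gamma> N"
      unfolding lwD by (rule cINF_greatest[OF Lne key])
    have bddD: "bdd_below (D ` (lip_maps \<gamma> N :: (real^'n \<Rightarrow> 'a) set))"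
      using key by (intro bdd_belowI2) blast
    have Dconst: "D (\<lambda>_. g) = h g" for g
      unfolding D_def h_def using Bne by (simp add: cINF_const)
    have "lip_width K \<gamma> N \<le> h g" for g
      unfolding lwD using cINF_lower[OF bddD constin[of g]] Dconst by simp
    hence upper: "lip_width K \<gamma> N \<le> rad K"
      unfolding radh by (intro cINF_greatest) auto
    show ?thesis using lower upper by simp
  qed
qed

end
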